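(* Let $n=n_1+\dots+n_m$ with each $n_i\in\{1,2,3\}$, partition $[n]$ into disjoint blocks $B_1,\dots,B_m$ with $|B_i|=n_i$, and let $f(S)=\sum_{i=1}^m f_i(S\cap B_i)$ where each $f_i:2^{B_i}\to\mathbb{R}_+$ is monotone submodular. Then $f^{+}(\mathbf{x})/f^{++}(\mathbf{x})\le4/3$ for all $\mathbf{x}\in[0,1]^n$ (with the convention $0/0=1$).
   Context: $[n]=\{1,\dots,n\}$. A set function $f:2^{V}\to\mathbb{R}_+$ is monotone if $f(S)\le f(T)$ for $S\subseteq T$, submodular if $f(S)+f(T)\ge f(S\cap T)+f(S\cup T)$. For $\mathbf{x}\in[0,1]^n$: the concave closure $f^{+}(\mathbf{x})=\max\sum_{S\subseteq[n]}\theta(S)f(S)$ over $\theta:2^{[n]}\to\mathbb{R}_{\ge0}$ with $\sum_S\theta(S)=1$ and $\sum_{S\ni i}\theta(S)=x_i$ for all $i$; the upper pairwise independent extension $f^{++}(\mathbf{x})$ is the same maximum with the additional constraints $\sum_{S\ni i,j}\theta(S)=x_ix_j$ for all $i<j$. *)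

theory Defs
  imports Complex_Main
begin

definition is_distribution :: "nat \<Rightarrow> (nat set \<Rightarrow> real) \<Rightarrow> bool" where
  "is_distribution n \<theta> \<longleftrightarrow>
     (\<forall>S. 0 \<le> \<theta> S) \<and> (\<forall>S. \<not> S \<subseteq> {1..n} \<longrightarrow> \<theta> S = 0) \<and>
     (\<Sum>S\<in>Pow {1..n}. \<theta> S) = 1"

definition marginals_ok :: "nat \<Rightarrow> (nat \<Rightarrow> real) \<Rightarrow> (nat set \<Rightarrow> real) \<Rightarrow> bool" where
  "marginals_ok n x \<theta> \<longleftrightarrow>
     (\<forall>i\<in>{1..n}. (\<Sum>S\<in>{S\<in>Pow {1..n}. i \<in> S}. \<theta> S) = x i)"

definition pairwise_ok :: "nat \<Rightarrow> (nat \<Rightarrow> real) \<Rightarrow> (nat set \<Rightarrow> real) \<Rightarrow> bool" where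
  "pairwise_ok n x \<theta> \<longleftrightarrow>
     (\<forall>i\<in>{1..n}. \<forall>j\<in>{1..n}. i < j \<longrightarrow>
        (\<Sum>S\<in>{S\<in>Pow {1..n}. i \<in> S \<and> j \<in> S}. \<theta> S) = x i * x j)"

text \<open>Concave closure f^+(x): maximum of the expected value over feasible distributions
  (the maximum is attained, as the feasible set is a nonempty compact polytope).\<close>
definition concave_closure :: "nat \<Rightarrow> (nat set \<Rightarrow> real) \<Rightarrow> (nat \<Rightarrow> real) \<Rightarrow> real" where
  "concave_closure n f x = Sup {(\<Sum>S\<in>Pow {1..n}. \<theta> S * f S) | \<theta>.
       is_distribution n \<theta> \<and> marginals_ok n x \<theta>}"

definition upper_pi_ext :: "nat \<Rightarrow> (nat set \<Rightarrow> real) \<Rightarrow> (nat \<Rightarrow> real) \<Rightarrow> real" where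
  "upper_pi_ext n f x = Sup {(\<Sum>S\<in>Pow {1..n}. \<theta> S * f S) | \<theta>.
       is_distribution n \<theta> \<and> marginals_ok n x \<theta> \<and> pairwise_ok n x \<theta>}"

definition monotone_set_fun :: "'a set \<Rightarrow> ('a set \<Rightarrow> real) \<Rightarrow> bool" where
  "monotone_set_fun V g \<longleftrightarrow> (\<forall>S T. S \<subseteq> T \<longrightarrow> T \<subseteq> V \<longrightarrow> g S \<le> g T)"

definition submodular_set_fun :: "'a set \<Rightarrow> ('a set \<Rightarrow> real) \<Rightarrow> bool" where
  "submodular_set_fun V g \<longleftrightarrow>
     (\<forall>S T. S \<subseteq> V \<longrightarrow> T \<subseteq> V \<longrightarrow> g (S \<inter> T) + g (S \<union> T) \<le> g S + g T)"

definition nonneg_set_fun :: "'a set \<Rightarrow> ('a set \<Rightarrow> real) \<Rightarrow> bool" where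
  "nonneg_set_fun V g \<longleftrightarrow> (\<forall>S. S \<subseteq> V \<longrightarrow> 0 \<le> g S)"

end

theory Submission
  imports Defs "HOL-Library.FuncSet"
begin


lemma S1:
  fixes a c Q :: real
  assumes "a \<ge> 0" "0 \<le> c" "c \<le> 1" "Q \<ge> 0" "Q \<ge> a + c - 1"
  shows "a + c - 4*a*c + 3*Q \<ge> 0"
proof (cases "a + c \<le> 1")
  case True
  have "(a+c)^2 \<le> a + c" using True assms by (simp add: power2_eq_square mult_le_cancel_left1 mult_right_le_one_le)
  moreover have "4*a*c \<le> (a+c)^2" using sum_squares_ge_zero[of "a-c" 0] by (simp add: power2_eq_square algebra_simps)
  ultimately show ?thesis using assms by linarith
next
  case False
  show ?thesis
  proof (cases "a \<ge> 1")
    case True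
    have "(a - 1)*(1-c) \<ge> 0" using True assms by simp
    then show ?thesis using assms False by (simp add: algebra_simps) 
  next
    case F2: False
    have "4*(1-a)*(1-c) \<le> ((1-a)+(1-c))^2" using sum_squares_ge_zero[of "a-c" 0] by (simp add: power2_eq_square algebra_simps)
    moreover have "((1-a)+(1-c))^2 \<le> 1" using F2 False assms by (simp add: abs_le_square_iff power2_eq_square mult_le_one)
    ultimately show ?thesis using assms False by (simp add: algebra_simps)
  qed
qed

lemma S2a:
  fixes x y z :: real
  assumes "0 \<le> x" "x \<le> 1" "0 \<le> y" "y \<le> 1" "0 \<le> z" "z \<le> 1" "x + y + z \<le> 2"
  shows "4*x*y*z \<le> x + y + z"
proof -
  define p where "p = x + y"
  have "4*x*y \<le> p^2" using sum_squares_ge_zero[of "x-y" 0] by (simp add: p_def power2_eq_square algebra_simps)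
  hence h1: "4*x*y*z \<le> p^2 * z" using assms by (simp add: mult_right_mono)
  show ?thesis
  proof (cases "p \<le> 1")
    case True
    have "p^2 \<le> p" using True assms p_def by (simp add: power2_eq_square mult_le_one mult_right_le_one_le)
    hence "p^2*z \<le> p" using assms True p_def
      by (smt (verit) mult_left_le mult_right_mono)
    then show ?thesis using h1 p_def assms by linarith
  next
    case False
    have z2: "z \<le> 2 - p" using assms p_def by simp
    have "p*(2-p) \<le> 1" using sum_squares_ge_zero[of "p-1" 0] by (simp add: power2_eq_square algebra_simps)
    hence "p*(p*(2-p)) \<le> p" using False by (simp add: mult_left_le)
    have "(p^2 - 1)*z \<le> (p^2-1)*(2-p)" using z2 False by (intro mult_left_mono) (auto simp: power2_eq_square, smt (verit) mult_less_cancel_left1)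
    moreover have "p^2*z = z + (p^2-1)*z" "(p^2-1)*(2-p) = p*(p*(2-p)) - 2 + p" by (simp_all add: algebra_simps power2_eq_square)
    moreover have "p \<le> 2" using assms p_def by simp
    ultimately show ?thesis using h1 \<open>p*(p*(2-p)) \<le> p\<close> p_def by linarith
  qed
qed
lemma S2b:
  fixes u v w :: real
  assumes "0 \<le> u" "0 \<le> v" "0 \<le> w" "u + v + w \<le> 1"
  shows "2*(u*v+u*w+v*w) - 2*u*v*w \<le> 1"
proof -
  have "3*(u*v+u*w+v*w) \<le> (u+v+w)^2" using sum_squares_ge_zero[of "u-v" "v-w"] sum_squares_ge_zero[of "u-w" 0]
    by (simp add: power2_eq_square algebra_simps)
  moreover have "(u+v+w)^2 \<le> 1" using assms by (simp add: power2_eq_square mult_le_one)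
  moreover have "u*v*w \<ge> 0" using assms by simp
  ultimately show ?thesis by linarith
qed
lemma S2:
  fixes x y z T :: real
  assumes "0 \<le> x" "x \<le> 1" "0 \<le> y" "y \<le> 1" "0 \<le> z" "z \<le> 1" "T \<ge> 0" "T \<ge> x + y + z - 2"
  shows "x + y + z - 4*x*y*z + 3*T \<ge> 0"
proof (cases "x + y + z \<le> 2")
  case True then show ?thesis using S2a[OF assms(1-6)] assms by linarith
next
  case False
  have "2*((1-x)*(1-y)+(1-x)*(1-z)+(1-y)*(1-z)) - 2*(1-x)*(1-y)*(1-z) \<le> 1"
    using False assms by (intro S2b) auto
  then show ?thesis using assms by (simp add: algebra_simps)
qed

definition G3 :: "real\<Rightarrow>real\<Rightarrow>real\<Rightarrow>real\<Rightarrow>real\<Rightarrow>real\<Rightarrow>real\<Rightarrow>real\<Rightarrow>real\<Rightarrow>real\<Rightarrow>real\<Rightarrow>real\<Rightarrow>real" where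
 "G3 x y z t f0 fa fb fc fab fac fbc fabc =
   ((1-x)*(1-y)*(1-z) - (t - x*y*z))*f0 + (x*(1-y)*(1-z) + (t - x*y*z))*fa + ((1-x)*y*(1-z) + (t - x*y*z))*fb
   + ((1-x)*(1-y)*z + (t - x*y*z))*fc + (x*y*(1-z) - (t - x*y*z))*fab + (x*(1-y)*z - (t - x*y*z))*fac
   + ((1-x)*y*z - (t - x*y*z))*fbc + t*fabc"

lemma core3:
  fixes f0 fa fb fc fab fac fbc fabc q0 qa qb qc qab qac qbc qabc x y z t :: real
  assumes q: "q0 \<ge> 0" "qa \<ge> 0" "qb \<ge> 0" "qc \<ge> 0" "qab \<ge> 0" "qac \<ge> 0" "qbc \<ge> 0" "qabc \<ge> 0"
    and qs: "q0 + qa + qb + qc + qab + qac + qbc + qabc = 1"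
    and xd: "x = qa + qab + qac + qabc" and yd: "y = qb + qab + qbc + qabc" and zd: "z = qc + qac + qbc + qabc"
    and f0: "f0 \<ge> 0"
    and mono: "fabc \<ge> fbc" "fabc \<ge> fac" "fabc \<ge> fab"
    and sub: "fa + fb \<ge> f0 + fab" "fa + fc \<ge> f0 + fac" "fb + fc \<ge> f0 + fbc"
             "fab + fac \<ge> fa + fabc" "fab + fbc \<ge> fb + fabc" "fac + fbc \<ge> fc + fabc"
    and tc: "(fabc - fab - fac - fbc + fa + fb + fc - f0 \<le> 0 \<and> t = x*y*z) \<or>
             (fabc - fab - fac - fbc + fa + fb + fc - f0 \<ge> 0 \<and>
               (t = x*y \<or> t = x*z \<or> t = y*z \<or> t = 1 - x - y - z + x*y + x*z + y*z))"
  shows "q0*f0 + qa*fa + qb*fb + qc*fc + qab*fab + qac*fac + qbc*fbc + qabc*fabc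
          \<le> 4/3 * G3 x y z t f0 fa fb fc fab fac fbc fabc"
proof -
  define D where "D = fabc - fab - fac - fbc + fa + fb + fc - f0"
  define Lab where "Lab = fa + fb - fab - f0"
  define Lac where "Lac = fa + fc - fac - f0"
  define Lbc where "Lbc = fb + fc - fbc - f0"
  define Pab where "Pab = qab + qabc"
  define Pac where "Pac = qac + qabc"
  define Pbc where "Pbc = qbc + qabc"
  define E where "E = q0*f0 + qa*fa + qb*fb + qc*fc + qab*fab + qac*fac + qbc*fbc + qabc*fabc"
  define G where "G = G3 x y z t f0 fa fb fc fab fac fbc fabc"
  have q0e: "q0 = 1 - qa - qb - qc - qab - qac - qbc - qabc" using qs by linarith
  have Eid: "E = f0 + x*(fa-f0) + y*(fb-f0) + z*(fc-f0) - Pab*Lab - Pac*Lac - Pbc*Lbc + qabc*D"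
    unfolding E_def Pab_def Pac_def Pbc_def Lab_def Lac_def Lbc_def D_def xd yd zd q0e
    by (simp add: algebra_simps Lab_def Lac_def Lbc_def D_def)
  have Gid: "G = f0 + x*(fa-f0) + y*(fb-f0) + z*(fc-f0) - x*y*Lab - x*z*Lac - y*z*Lbc + t*D"
    unfolding G_def G3_def Lab_def Lac_def Lbc_def D_def by (simp add: algebra_simps Lab_def Lac_def Lbc_def D_def)
  have qae: "qa = x - qab - qac - qabc" using xd by linarith
  have qbe: "qb = y - qab - qbc - qabc" using yd by linarith
  have qce: "qc = z - qac - qbc - qabc" using zd by linarith
  have x01: "0 \<le> x" "x \<le> 1" "0 \<le> y" "y \<le> 1" "0 \<le> z" "z \<le> 1" using q qs xd yd zd by linarith+
  have Pab1: "Pab \<ge> 0" "Pab \<ge> x + y - 1" using q qs xd yd unfolding Pab_def by linarith+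
  have Pac1: "Pac \<ge> 0" "Pac \<ge> x + z - 1" using q qs xd zd unfolding Pac_def by linarith+
  have Pbc1: "Pbc \<ge> 0" "Pbc \<ge> y + z - 1" using q qs yd zd unfolding Pbc_def by linarith+
  have sab: "x + y - 4*x*y + 3*Pab \<ge> 0" using S1[of x y Pab] x01 Pab1 by simp
  have sac: "x + z - 4*x*z + 3*Pac \<ge> 0" using S1[of x z Pac] x01 Pac1 by simp
  have sbc: "y + z - 4*y*z + 3*Pbc \<ge> 0" using S1[of y z Pbc] x01 Pbc1 by simp
  have m1: "x*(fabc - fbc) \<ge> 0" "y*(fabc - fac) \<ge> 0" "z*(fabc - fab) \<ge> 0" using x01 mono by simp_all
  show ?thesis
  proof (cases "D \<le> 0 \<and> t = x*y*z")
    case True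
    have id: "4*G - 3*E = f0 + x*(fabc - fbc) + y*(fabc - fac) + z*(fabc - fab)
       + Lab*(x + y - 4*x*y + 3*Pab) + Lac*(x + z - 4*x*z + 3*Pac) + Lbc*(y + z - 4*y*z + 3*Pbc)
       + (-D)*(x + y + z - 4*x*y*z + 3*qabc)"
      unfolding Eid Gid True[THEN conjunct2] by (simp add: algebra_simps Lab_def Lac_def Lbc_def D_def)
    have "x + y + z - 4*x*y*z + 3*qabc \<ge> 0" using S2[of x y z qabc] x01 q qs xd yd zd by linarith
    hence "(-D)*(x + y + z - 4*x*y*z + 3*qabc) \<ge> 0" using True by (intro mult_nonneg_nonneg) auto
    moreover have "Lab*(x + y - 4*x*y + 3*Pab) \<ge> 0" "Lac*(x + z - 4*x*z + 3*Pac) \<ge> 0" "Lbc*(y + z - 4*y*z + 3*Pbc) \<ge> 0"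
      using sab sac sbc sub unfolding Lab_def Lac_def Lbc_def by simp_all
    ultimately have "4*G - 3*E \<ge> 0" using id m1 f0 by linarith
    then show ?thesis unfolding E_def G_def by simp
  next
    case False
    with tc have D0: "D \<ge> 0" and tt: "t = x*y \<or> t = x*z \<or> t = y*z \<or> t = 1 - x - y - z + x*y + x*z + y*z"
      unfolding D_def by auto
    define coef where "coef = x + y + z - 4*(x*y + x*z + y*z) + 4*t + 3*(Pab + Pac + Pbc - qabc)"
    have id: "4*G - 3*E = f0 + x*(fabc - fbc) + y*(fabc - fac) + z*(fabc - fab)
       + (Lab - D)*(x + y - 4*x*y + 3*Pab) + (Lac - D)*(x + z - 4*x*z + 3*Pac) + (Lbc - D)*(y + z - 4*y*z + 3*Pbc)
       + D*coef"
      unfolding Eid Gid coef_def by (simp add: algebra_simps Lab_def Lac_def Lbc_def D_def)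
    have Q0: "Pab + Pac + Pbc - qabc \<ge> 0" "Pab + Pac + Pbc - qabc \<ge> x + y + z - 1"
      using q qs xd yd zd unfolding Pab_def Pac_def Pbc_def by linarith+
    have "coef \<ge> 0"
      using tt
    proof (elim disjE)
      assume "t = x*y" thus ?thesis using S1[of "x+y" z "Pab + Pac + Pbc - qabc"] x01 Q0 unfolding coef_def
        by (simp add: algebra_simps Lab_def Lac_def Lbc_def D_def)
    next
      assume "t = x*z" thus ?thesis using S1[of "x+z" y "Pab + Pac + Pbc - qabc"] x01 Q0 unfolding coef_def
        by (simp add: algebra_simps Lab_def Lac_def Lbc_def D_def)
    next
      assume "t = y*z" thus ?thesis using S1[of "y+z" x "Pab + Pac + Pbc - qabc"] x01 Q0 unfolding coef_def
        by (simp add: algebra_simps Lab_def Lac_def Lbc_def D_def)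
    next
      assume "t = 1 - x - y - z + x*y + x*z + y*z" thus ?thesis using x01 Q0 unfolding coef_def
        by (simp add: algebra_simps Lab_def Lac_def Lbc_def D_def)
    qed
    hence "D*coef \<ge> 0" using D0 by simp
    moreover have "(Lab - D)*(x + y - 4*x*y + 3*Pab) \<ge> 0" "(Lac - D)*(x + z - 4*x*z + 3*Pac) \<ge> 0" "(Lbc - D)*(y + z - 4*y*z + 3*Pbc) \<ge> 0"
      using sab sac sbc sub unfolding Lab_def Lac_def Lbc_def D_def by simp_all
    ultimately have "4*G - 3*E \<ge> 0" using id m1 f0 by linarith
    then show ?thesis unfolding E_def G_def by simp
  qed
qed

lemma pow3_sum:
  assumes "a \<noteq> b" "a \<noteq> c" "b \<noteq> c"
  shows "(\<Sum>A\<in>Pow {a,b,c}. g A) = g {} + g {a} + g {b} + g {c} + g {a,b} + g {a,c} + g {b,c} + g {a,b,c}"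
proof -
  have P: "Pow {a,b,c} = {{},{a},{b},{c},{a,b},{a,c},{b,c},{a,b,c}}" by (auto simp: Pow_insert)
  have n1: "{a,b} \<notin> {{a,c},{b,c},{a,b,c}}" using assms by (simp add: insert_eq_iff doubleton_eq_iff) 
  have n2: "{a,c} \<notin> {{b,c},{a,b,c}}" using assms by (simp add: insert_eq_iff doubleton_eq_iff)
  have n3: "{b,c} \<notin> {{a,b,c}}" using assms by (simp add: insert_eq_iff doubleton_eq_iff)
  have n4: "{c} \<notin> {{a,b},{a,c},{b,c},{a,b,c}}" using assms by (simp add: insert_eq_iff doubleton_eq_iff)
  have n5: "{b} \<notin> {{c},{a,b},{a,c},{b,c},{a,b,c}}" using assms by (simp add: insert_eq_iff doubleton_eq_iff)
  have n6: "{a} \<notin> {{b},{c},{a,b},{a,c},{b,c},{a,b,c}}" using assms by (simp add: insert_eq_iff doubleton_eq_iff)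
  have n8: "{a,b,c} \<notin> {}" by simp
  have n7: "{} \<notin> {{a},{b},{c},{a,b},{a,c},{b,c},{a,b,c}}" by simp
  show ?thesis unfolding P 
    by (simp only: sum.insert[OF _ n7] sum.insert[OF _ n6] sum.insert[OF _ n5] sum.insert[OF _ n4]
       sum.insert[OF _ n3] sum.insert[OF _ n2] sum.insert[OF _ n1] sum.insert[OF _ n8] finite.intros sum.empty finite_insert add.assoc add_0_right)
qed
lemma pow3_cases:
  assumes "A \<subseteq> {a,b,c}"
  shows "A = {} \<or> A = {a} \<or> A = {b} \<or> A = {c} \<or> A = {a,b} \<or> A = {a,c} \<or> A = {b,c} \<or> A = {a,b,c}"
proof (cases "a\<in>A"; cases "b\<in>A"; cases "c\<in>A")
qed (use assms in blast)+

definition pprod :: "nat set \<Rightarrow> (nat \<Rightarrow> real) \<Rightarrow> nat set \<Rightarrow> real" where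
  "pprod B x A = (\<Prod>j\<in>A. x j) * (\<Prod>j\<in>B - A. 1 - x j)"

definition good_block :: "nat set \<Rightarrow> (nat \<Rightarrow> real) \<Rightarrow> (nat set \<Rightarrow> real) \<Rightarrow> (nat set \<Rightarrow> real) \<Rightarrow> bool" where
 "good_block B x f \<mu> \<longleftrightarrow> (\<forall>A\<in>Pow B. 0 \<le> \<mu> A) \<and> (\<Sum>A\<in>Pow B. \<mu> A) = 1 \<and>
   (\<forall>j\<in>B. (\<Sum>A\<in>Pow B. (if j\<in>A then 1 else 0) * \<mu> A) = x j) \<and>
   (\<forall>j\<in>B. \<forall>k\<in>B. j \<noteq> k \<longrightarrow> (\<Sum>A\<in>Pow B. (if j\<in>A then 1 else 0) * ((if k\<in>A then 1 else 0) * \<mu> A)) = x j * x k) \<and>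
   (\<forall>\<theta>. (\<forall>A\<in>Pow B. 0 \<le> \<theta> A) \<longrightarrow> (\<Sum>A\<in>Pow B. \<theta> A) = 1 \<longrightarrow>
      (\<forall>j\<in>B. (\<Sum>A\<in>Pow B. (if j\<in>A then 1 else 0) * \<theta> A) = x j) \<longrightarrow>
      (\<Sum>A\<in>Pow B. \<theta> A * f A) \<le> 4/3 * (\<Sum>A\<in>Pow B. \<mu> A * f A))"

lemma submod_inst:
  assumes "submodular_set_fun B f" "S \<subseteq> B" "T \<subseteq> B" "S \<inter> T = I" "S \<union> T = U"
  shows "f I + f U \<le> f S + f T"
  using assms unfolding submodular_set_fun_def by blast


lemma block3:
  assumes abc: "a \<noteq> b" "a \<noteq> c" "b \<noteq> c" and B: "B = {a,b,c}"
    and x: "\<forall>j\<in>B. 0 \<le> x j \<and> x j \<le> 1"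
    and nn: "nonneg_set_fun B f" and mo: "monotone_set_fun B f" and sm: "submodular_set_fun B f"
  shows "\<exists>\<mu>. good_block B x f \<mu>"
proof -
  define xa xb xc where "xa = x a" "xb = x b" "xc = x c"
  have x01: "0 \<le> xa" "xa \<le> 1" "0 \<le> xb" "xb \<le> 1" "0 \<le> xc" "xc \<le> 1" using x B xa_xb_xc_def by auto
  define D where "D = f {a,b,c} - f {a,b} - f {a,c} - f {b,c} + f {a} + f {b} + f {c} - f {}"
  define r where "r = 1 - xa - xb - xc + xa*xb + xa*xc + xb*xc"
  define t where "t = (if D \<le> 0 then xa*xb*xc else Min {xa*xb, xa*xc, xb*xc, r})"
  have tc: "(D \<le> 0 \<and> t = xa*xb*xc) \<or> (D \<ge> 0 \<and> (t = xa*xb \<or> t = xa*xc \<or> t = xb*xc \<or> t = r))"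
  proof (cases "D \<le> 0")
    case True then show ?thesis by (simp add: t_def)
  next
    case False
    have "Min {xa*xb, xa*xc, xb*xc, r} \<in> {xa*xb, xa*xc, xb*xc, r}" by (rule Min_in) auto
    then show ?thesis using False by (auto simp: t_def)
  qed
  have pxy: "xa*xb*xc \<le> xa*xb" "xa*xb*xc \<le> xa*xc" "xa*xb*xc \<le> xb*xc"
  proof -
    have "xc*(xa*xb) \<le> xa*xb" "xb*(xa*xc) \<le> xa*xc" "xa*(xb*xc) \<le> xb*xc"
      using x01 by (simp_all add: mult_left_le_one_le)
    thus "xa*xb*xc \<le> xa*xb" "xa*xb*xc \<le> xa*xc" "xa*xb*xc \<le> xb*xc" by (simp_all add: algebra_simps)
  qed
  have pr: "xa*xb*xc \<le> r" proof -
    have "0 \<le> (1-xa)*(1-xb)*(1-xc)" using x01 by simp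
    thus ?thesis unfolding r_def by (simp add: algebra_simps)
  qed
  have tlo: "xa*xb*xc \<le> t" "t \<le> xa*xb" "t \<le> xa*xc" "t \<le> xb*xc" "t \<le> r"
    using pxy pr by (auto simp: t_def)
  have ex: "xa*xb + xa*xc \<le> xa*(xb*xc) + xa" "xa*xb + xb*xc \<le> xa*(xb*xc) + xb" "xa*xc + xb*xc \<le> xa*(xb*xc) + xc"
    "0 \<le> xa*(xb*xc)"
  proof -
    have "0 \<le> xa*(1-xb)*(1-xc)" "0 \<le> xb*(1-xa)*(1-xc)" "0 \<le> xc*(1-xa)*(1-xb)" using x01 by simp_all
    thus "xa*xb + xa*xc \<le> xa*(xb*xc) + xa" "xa*xb + xb*xc \<le> xa*(xb*xc) + xb" "xa*xc + xb*xc \<le> xa*(xb*xc) + xc"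
      by (simp_all add: algebra_simps)
    show "0 \<le> xa*(xb*xc)" using x01 by simp
  qed
  define \<mu> where "\<mu> = (\<lambda>A. pprod B x A + (t - xa*xb*xc) * (-1)^card (B - A))"
  have mu: "\<mu> {} = r - t" "\<mu> {a} = xa - xa*xb - xa*xc + t" "\<mu> {b} = xb - xa*xb - xb*xc + t"
     "\<mu> {c} = xc - xa*xc - xb*xc + t" "\<mu> {a,b} = xa*xb - t" "\<mu> {a,c} = xa*xc - t" "\<mu> {b,c} = xb*xc - t"
     "\<mu> {a,b,c} = t"
    using abc unfolding \<mu>_def pprod_def B xa_xb_xc_def r_def by (simp_all add: insert_Diff_if algebra_simps)
  have S: "\<And>g. (\<Sum>A\<in>Pow B. g A) = g {} + g {a} + g {b} + g {c} + g {a,b} + g {a,c} + g {b,c} + g {a,b,c}"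
    unfolding B by (rule pow3_sum[OF abc])
  have mem: "a \<in> {a,b}" "b \<in> {a,b}" "c \<notin> {a,b}" "a \<in> {a,c}" "c \<in> {a,c}" "b \<notin> {a,c}"
     "b \<in> {b,c}" "c \<in> {b,c}" "a \<notin> {b,c}" "a \<in> {a,b,c}" "b \<in> {a,b,c}" "c \<in> {a,b,c}"
     "a \<in> {a}" "b \<notin> {a}" "c \<notin> {a}" "a \<notin> {b}" "b \<in> {b}" "c \<notin> {b}" "a \<notin> {c}" "b \<notin> {c}" "c \<in> {c}"
    using abc by auto
  show ?thesis
  proof (rule exI[of _ \<mu>], unfold good_block_def, intro conjI)
    show "\<forall>A\<in>Pow B. 0 \<le> \<mu> A"
    proof
      fix A assume "A \<in> Pow B"
      hence "A \<subseteq> {a,b,c}" using B by simp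
      from pow3_cases[OF this] show "0 \<le> \<mu> A"
      proof (elim disjE)
      qed (insert tlo x01 pxy ex, simp_all add: mu r_def algebra_simps)
    qed
    show "(\<Sum>A\<in>Pow B. \<mu> A) = 1" unfolding S mu r_def by (simp add: algebra_simps)
    show "\<forall>j\<in>B. (\<Sum>A\<in>Pow B. (if j\<in>A then 1 else 0) * \<mu> A) = x j"
      unfolding S using abc by (auto simp: B mu mem xa_xb_xc_def algebra_simps)
    show "\<forall>j\<in>B. \<forall>k\<in>B. j \<noteq> k \<longrightarrow> (\<Sum>A\<in>Pow B. (if j\<in>A then 1 else 0) * ((if k\<in>A then 1 else 0) * \<mu> A)) = x j * x k"
      unfolding S using abc by (auto simp: B mu mem xa_xb_xc_def algebra_simps)
    show "\<forall>\<theta>. (\<forall>A\<in>Pow B. 0 \<le> \<theta> A) \<longrightarrow> (\<Sum>A\<in>Pow B. \<theta> A) = 1 \<longrightarrow>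
      (\<forall>j\<in>B. (\<Sum>A\<in>Pow B. (if j\<in>A then 1 else 0) * \<theta> A) = x j) \<longrightarrow>
      (\<Sum>A\<in>Pow B. \<theta> A * f A) \<le> 4/3 * (\<Sum>A\<in>Pow B. \<mu> A * f A)"
    proof (intro allI impI)
      fix \<theta> :: "nat set \<Rightarrow> real"
      assume h1: "\<forall>A\<in>Pow B. 0 \<le> \<theta> A" and h2: "(\<Sum>A\<in>Pow B. \<theta> A) = 1"
        and h3: "\<forall>j\<in>B. (\<Sum>A\<in>Pow B. (if j\<in>A then 1 else 0) * \<theta> A) = x j"
      have q: "\<theta> {} \<ge> 0" "\<theta> {a} \<ge> 0" "\<theta> {b} \<ge> 0" "\<theta> {c} \<ge> 0" "\<theta> {a,b} \<ge> 0" "\<theta> {a,c} \<ge> 0"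
        "\<theta> {b,c} \<ge> 0" "\<theta> {a,b,c} \<ge> 0" using h1 B by auto
      have qs: "\<theta> {} + \<theta> {a} + \<theta> {b} + \<theta> {c} + \<theta> {a,b} + \<theta> {a,c} + \<theta> {b,c} + \<theta> {a,b,c} = 1"
        using h2 unfolding S .
      have xd: "xa = \<theta> {a} + \<theta> {a,b} + \<theta> {a,c} + \<theta> {a,b,c}"
        using h3[rule_format, of a] unfolding S using abc by (simp add: B mem xa_xb_xc_def)
      have yd: "xb = \<theta> {b} + \<theta> {a,b} + \<theta> {b,c} + \<theta> {a,b,c}"
        using h3[rule_format, of b] unfolding S using abc by (simp add: B mem xa_xb_xc_def)
      have zd: "xc = \<theta> {c} + \<theta> {a,c} + \<theta> {b,c} + \<theta> {a,b,c}"
        using h3[rule_format, of c] unfolding S using abc by (simp add: B mem xa_xb_xc_def)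
      have f0: "f {} \<ge> 0" using nn unfolding nonneg_set_fun_def by simp
      have mono: "f {a,b,c} \<ge> f {b,c}" "f {a,b,c} \<ge> f {a,c}" "f {a,b,c} \<ge> f {a,b}"
        using mo unfolding monotone_set_fun_def B by (meson insert_mono subset_insertI order_refl)+
      have sub: "f {a} + f {b} \<ge> f {} + f {a,b}" "f {a} + f {c} \<ge> f {} + f {a,c}" "f {b} + f {c} \<ge> f {} + f {b,c}"
             "f {a,b} + f {a,c} \<ge> f {a} + f {a,b,c}" "f {a,b} + f {b,c} \<ge> f {b} + f {a,b,c}"
             "f {a,c} + f {b,c} \<ge> f {c} + f {a,b,c}"
        by (rule submod_inst[OF sm]; use abc in \<open>auto simp: B\<close>)+
      have "\<theta> {} * f {} + \<theta> {a} * f {a} + \<theta> {b} * f {b} + \<theta> {c} * f {c} + \<theta> {a,b} * f {a,b}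
          + \<theta> {a,c} * f {a,c} + \<theta> {b,c} * f {b,c} + \<theta> {a,b,c} * f {a,b,c}
          \<le> 4/3 * G3 xa xb xc t (f {}) (f {a}) (f {b}) (f {c}) (f {a,b}) (f {a,c}) (f {b,c}) (f {a,b,c})"
        by (rule core3[OF q qs xd yd zd f0 mono sub]) (use tc in \<open>simp add: D_def r_def\<close>)
      moreover have "G3 xa xb xc t (f {}) (f {a}) (f {b}) (f {c}) (f {a,b}) (f {a,c}) (f {b,c}) (f {a,b,c})
          = (\<Sum>A\<in>Pow B. \<mu> A * f A)"
        unfolding S mu G3_def r_def by (simp add: algebra_simps)
      ultimately show "(\<Sum>A\<in>Pow B. \<theta> A * f A) \<le> 4/3 * (\<Sum>A\<in>Pow B. \<mu> A * f A)"
        unfolding S by simp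
    qed
  qed
qed

lemma core2:
  fixes f0 fa fb fab q0 qa qb qab x y :: real
  assumes q: "q0 \<ge> 0" "qa \<ge> 0" "qb \<ge> 0" "qab \<ge> 0"
    and qs: "q0 + qa + qb + qab = 1" and xd: "x = qa + qab" and yd: "y = qb + qab"
    and f0: "f0 \<ge> 0" and mono: "fab \<ge> fb" "fab \<ge> fa" and sub: "fa + fb \<ge> f0 + fab"
  shows "q0*f0 + qa*fa + qb*fb + qab*fab \<le> 4/3 * ((1-x)*(1-y)*f0 + x*(1-y)*fa + (1-x)*y*fb + x*y*fab)"
proof -
  define L where "L = fa + fb - fab - f0"
  define E where "E = q0*f0 + qa*fa + qb*fb + qab*fab"
  define G where "G = (1-x)*(1-y)*f0 + x*(1-y)*fa + (1-x)*y*fb + x*y*fab"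
  have q0e: "q0 = 1 - qa - qb - qab" using qs by linarith
  have Eid: "E = f0 + x*(fa-f0) + y*(fb-f0) - qab*L" unfolding E_def L_def xd yd q0e by (simp add: algebra_simps)
  have Gid: "G = f0 + x*(fa-f0) + y*(fb-f0) - x*y*L" unfolding G_def L_def by (simp add: algebra_simps)
  have id: "4*G - 3*E = f0 + x*(fab - fb) + y*(fab - fa) + L*(x + y - 4*x*y + 3*qab)"
    unfolding Eid Gid by (simp add: algebra_simps L_def)
  have x01: "0 \<le> x" "0 \<le> y" "y \<le> 1" using q qs xd yd by linarith+
  have "x + y - 4*x*y + 3*qab \<ge> 0" using S1[of x y qab] x01 q qs xd yd by linarith
  hence "L*(x + y - 4*x*y + 3*qab) \<ge> 0" using sub L_def by simp
  moreover have "x*(fab - fb) \<ge> 0" "y*(fab - fa) \<ge> 0" using x01 mono by simp_all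
  ultimately have "4*G - 3*E \<ge> 0" using id f0 by linarith
  thus ?thesis unfolding E_def G_def by simp
qed

lemma pow2_sum:
  assumes "a \<noteq> b"
  shows "(\<Sum>A\<in>Pow {a,b}. g A) = g {} + g {a} + g {b} + g {a,b}"
proof -
  have P: "Pow {a,b} = {{},{a},{b},{a,b}}" by (auto simp: Pow_insert)
  have n8: "{a,b} \<notin> {}" by simp
  have n4: "{b} \<notin> {{a,b}}" using assms by (simp add: insert_eq_iff doubleton_eq_iff)
  have n5: "{a} \<notin> {{b},{a,b}}" using assms by (simp add: insert_eq_iff doubleton_eq_iff)
  have n7: "{} \<notin> {{a},{b},{a,b}}" by simp
  show ?thesis unfolding P
    by (simp only: sum.insert[OF _ n7] sum.insert[OF _ n5] sum.insert[OF _ n4] sum.insert[OF _ n8]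
       finite.intros sum.empty finite_insert add.assoc add_0_right)
qed

lemma pow1_sum: "(\<Sum>A\<in>Pow {a}. g A) = g {} + g {a}"
proof -
  have P: "Pow {a} = {{},{a}}" by (auto simp: Pow_insert)
  show ?thesis unfolding P by simp
qed

lemma block2:
  assumes ab: "a \<noteq> b" and B: "B = {a,b}"
    and x: "\<forall>j\<in>B. 0 \<le> x j \<and> x j \<le> 1"
    and nn: "nonneg_set_fun B f" and mo: "monotone_set_fun B f" and sm: "submodular_set_fun B f"
  shows "\<exists>\<mu>. good_block B x f \<mu>"
proof -
  define xa xb where "xa = x a" "xb = x b"
  have x01: "0 \<le> xa" "xa \<le> 1" "0 \<le> xb" "xb \<le> 1" using x B xa_xb_def by auto
  define \<mu> where "\<mu> = pprod B x"
  have mu: "\<mu> {} = (1-xa)*(1-xb)" "\<mu> {a} = xa*(1-xb)" "\<mu> {b} = (1-xa)*xb" "\<mu> {a,b} = xa*xb"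
    using ab unfolding \<mu>_def pprod_def B xa_xb_def by (simp_all add: insert_Diff_if algebra_simps)
  have S: "\<And>g. (\<Sum>A\<in>Pow B. g A) = g {} + g {a} + g {b} + g {a,b}"
    unfolding B by (rule pow2_sum[OF ab])
  have mem: "a \<in> {a,b}" "b \<in> {a,b}" "a \<in> {a}" "b \<notin> {a}" "a \<notin> {b}" "b \<in> {b}"
    using ab by auto
  show ?thesis
  proof (rule exI[of _ \<mu>], unfold good_block_def, intro conjI)
    show "\<forall>A\<in>Pow B. 0 \<le> \<mu> A"
    proof
      fix A assume "A \<in> Pow B"
      hence "A \<subseteq> {a,b}" using B by simp
      hence "A = {} \<or> A = {a} \<or> A = {b} \<or> A = {a,b}" by blast
      then show "0 \<le> \<mu> A" using x01 by (auto simp: mu)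
    qed
    show "(\<Sum>A\<in>Pow B. \<mu> A) = 1" unfolding S mu by (simp add: algebra_simps)
    show "\<forall>j\<in>B. (\<Sum>A\<in>Pow B. (if j\<in>A then 1 else 0) * \<mu> A) = x j"
      unfolding S using ab by (auto simp: B mu mem xa_xb_def algebra_simps)
    show "\<forall>j\<in>B. \<forall>k\<in>B. j \<noteq> k \<longrightarrow> (\<Sum>A\<in>Pow B. (if j\<in>A then 1 else 0) * ((if k\<in>A then 1 else 0) * \<mu> A)) = x j * x k"
      unfolding S using ab by (auto simp: B mu mem xa_xb_def algebra_simps)
    show "\<forall>\<theta>. (\<forall>A\<in>Pow B. 0 \<le> \<theta> A) \<longrightarrow> (\<Sum>A\<in>Pow B. \<theta> A) = 1 \<longrightarrow>
      (\<forall>j\<in>B. (\<Sum>A\<in>Pow B. (if j\<in>A then 1 else 0) * \<theta> A) = x j) \<longrightarrow>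
      (\<Sum>A\<in>Pow B. \<theta> A * f A) \<le> 4/3 * (\<Sum>A\<in>Pow B. \<mu> A * f A)"
    proof (intro allI impI)
      fix \<theta> :: "nat set \<Rightarrow> real"
      assume h1: "\<forall>A\<in>Pow B. 0 \<le> \<theta> A" and h2: "(\<Sum>A\<in>Pow B. \<theta> A) = 1"
        and h3: "\<forall>j\<in>B. (\<Sum>A\<in>Pow B. (if j\<in>A then 1 else 0) * \<theta> A) = x j"
      have q: "\<theta> {} \<ge> 0" "\<theta> {a} \<ge> 0" "\<theta> {b} \<ge> 0" "\<theta> {a,b} \<ge> 0" using h1 B by auto
      have qs: "\<theta> {} + \<theta> {a} + \<theta> {b} + \<theta> {a,b} = 1" using h2 unfolding S .
      have xd: "xa = \<theta> {a} + \<theta> {a,b}"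
        using h3[rule_format, of a] unfolding S using ab by (simp add: B mem xa_xb_def)
      have yd: "xb = \<theta> {b} + \<theta> {a,b}"
        using h3[rule_format, of b] unfolding S using ab by (simp add: B mem xa_xb_def)
      have f0: "f {} \<ge> 0" using nn unfolding nonneg_set_fun_def by simp
      have mono: "f {a,b} \<ge> f {b}" "f {a,b} \<ge> f {a}"
        using mo unfolding monotone_set_fun_def B by (meson insert_mono subset_insertI order_refl)+
      have sub: "f {a} + f {b} \<ge> f {} + f {a,b}"
        by (rule submod_inst[OF sm]; use ab in \<open>auto simp: B\<close>)
      have "\<theta> {} * f {} + \<theta> {a} * f {a} + \<theta> {b} * f {b} + \<theta> {a,b} * f {a,b}
          \<le> 4/3 * ((1-xa)*(1-xb)*f {} + xa*(1-xb)*f {a} + (1-xa)*xb*f {b} + xa*xb*f {a,b})"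
        by (rule core2[OF q qs xd yd f0 mono sub])
      then show "(\<Sum>A\<in>Pow B. \<theta> A * f A) \<le> 4/3 * (\<Sum>A\<in>Pow B. \<mu> A * f A)"
        unfolding S mu by simp
    qed
  qed
qed

lemma block1:
  assumes B: "B = {a}"
    and x: "\<forall>j\<in>B. 0 \<le> x j \<and> x j \<le> 1"
    and nn: "nonneg_set_fun B f"
  shows "\<exists>\<mu>. good_block B x f \<mu>"
proof -
  have x01: "0 \<le> x a" "x a \<le> 1" using x B by auto
  define \<mu> where "\<mu> = pprod B x"
  have mu: "\<mu> {} = 1 - x a" "\<mu> {a} = x a"
    unfolding \<mu>_def pprod_def B by simp_all
  have S: "\<And>g. (\<Sum>A\<in>Pow B. g A) = g {} + g {a}" unfolding B by (rule pow1_sum)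
  have f0: "f {} \<ge> 0" "f {a} \<ge> 0" using nn unfolding nonneg_set_fun_def B by simp_all
  show ?thesis
  proof (rule exI[of _ \<mu>], unfold good_block_def, intro conjI)
    show "\<forall>A\<in>Pow B. 0 \<le> \<mu> A"
    proof
      fix A assume "A \<in> Pow B"
      hence "A = {} \<or> A = {a}" using B by blast
      then show "0 \<le> \<mu> A" using x01 by (auto simp: mu)
    qed
    show "(\<Sum>A\<in>Pow B. \<mu> A) = 1" unfolding S mu by simp
    show "\<forall>j\<in>B. (\<Sum>A\<in>Pow B. (if j\<in>A then 1 else 0) * \<mu> A) = x j"
      unfolding S by (simp add: B mu)
    show "\<forall>j\<in>B. \<forall>k\<in>B. j \<noteq> k \<longrightarrow> (\<Sum>A\<in>Pow B. (if j\<in>A then 1 else 0) * ((if k\<in>A then 1 else 0) * \<mu> A)) = x j * x k"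
      by (simp add: B)
    show "\<forall>\<theta>. (\<forall>A\<in>Pow B. 0 \<le> \<theta> A) \<longrightarrow> (\<Sum>A\<in>Pow B. \<theta> A) = 1 \<longrightarrow>
      (\<forall>j\<in>B. (\<Sum>A\<in>Pow B. (if j\<in>A then 1 else 0) * \<theta> A) = x j) \<longrightarrow>
      (\<Sum>A\<in>Pow B. \<theta> A * f A) \<le> 4/3 * (\<Sum>A\<in>Pow B. \<mu> A * f A)"
    proof (intro allI impI)
      fix \<theta> :: "nat set \<Rightarrow> real"
      assume h2: "(\<Sum>A\<in>Pow B. \<theta> A) = 1"
        and h3: "\<forall>j\<in>B. (\<Sum>A\<in>Pow B. (if j\<in>A then 1 else 0) * \<theta> A) = x j"
      have e: "\<theta> {a} = x a" "\<theta> {} = 1 - x a" using h2 h3 unfolding S by (simp_all add: B)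
      have "0 \<le> x a * f {a} + f {} * (1 - x a)" using x01 f0 by simp
      then show "(\<Sum>A\<in>Pow B. \<theta> A * f A) \<le> 4/3 * (\<Sum>A\<in>Pow B. \<mu> A * f A)"
        unfolding S mu e by simp
    qed
  qed
qed

lemma block_any:
  assumes fin: "card B \<in> {1,2,3}"
    and x: "\<forall>j\<in>B. 0 \<le> x j \<and> x j \<le> 1"
    and nn: "nonneg_set_fun B f" and mo: "monotone_set_fun B f" and sm: "submodular_set_fun B f"
  shows "\<exists>\<mu>. good_block B x f \<mu>"
proof -
  from fin consider "card B = 1" | "card B = 2" | "card B = 3" by auto
  then show ?thesis
  proof cases
    case 1 then obtain a where "B = {a}" by (auto simp: card_1_singleton_iff)
    then show ?thesis using block1 x nn by blast
  next
    case 2 then obtain a b where "B = {a,b}" "a \<noteq> b" by (auto simp: card_2_iff)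
    then show ?thesis using block2 x nn mo sm by blast
  next
    case 3 then obtain a b c where "B = {a,b,c}" "a \<noteq> b" "b \<noteq> c" "a \<noteq> c" by (auto simp: card_3_iff)
    then show ?thesis using block3 x nn mo sm by blast
  qed
qed

lemma sum_pow_prod:
  fixes h :: "nat \<Rightarrow> nat set \<Rightarrow> real"
  assumes finI: "finite I" and finB: "\<forall>i\<in>I. finite (B i)"
    and disj: "\<forall>i\<in>I. \<forall>j\<in>I. i \<noteq> j \<longrightarrow> B i \<inter> B j = {}"
  shows "(\<Sum>S\<in>Pow (\<Union>i\<in>I. B i). \<Prod>i\<in>I. h i (S \<inter> B i)) = (\<Prod>i\<in>I. \<Sum>A\<in>Pow (B i). h i A)"
proof -
  let ?P = "PiE I (\<lambda>i. Pow (B i))"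
  have key: "(\<Union>j\<in>I. g j) \<inter> B i = g i" if "g \<in> ?P" "i \<in> I" for g i
  proof -
    have "g j \<subseteq> B j" if "j \<in> I" for j using \<open>g \<in> ?P\<close> that by (auto simp: PiE_def Pi_def)
    note sub = this
    show ?thesis
    proof (intro equalityI subsetI)
      fix y assume "y \<in> (\<Union>j\<in>I. g j) \<inter> B i"
      then obtain j where j: "j \<in> I" "y \<in> g j" "y \<in> B i" by blast
      show "y \<in> g i"
      proof (cases "j = i")
        case True then show ?thesis using j by simp
      next
        case False
        have "y \<in> B j" using sub[OF j(1)] j(2) by blast
        hence "y \<in> B i \<inter> B j" using j(3) by blast
        then show ?thesis using disj \<open>i \<in> I\<close> j(1) False by auto
      qed
    next
      fix y assume "y \<in> g i" thus "y \<in> (\<Union>j\<in>I. g j) \<inter> B i" using sub[OF \<open>i \<in> I\<close>] \<open>i \<in> I\<close> by blast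
    qed
  qed
  have bij: "bij_betw (\<lambda>g. \<Union>j\<in>I. g j) ?P (Pow (\<Union>i\<in>I. B i))"
  proof (rule bij_betw_byWitness[where f'="\<lambda>S. restrict (\<lambda>i. S \<inter> B i) I"])
    show "\<forall>g\<in>?P. restrict (\<lambda>i. (\<Union>j\<in>I. g j) \<inter> B i) I = g"
    proof
      fix g assume g: "g \<in> ?P"
      show "restrict (\<lambda>i. (\<Union>j\<in>I. g j) \<inter> B i) I = g"
      proof (rule ext)
        fix i show "restrict (\<lambda>i. (\<Union>j\<in>I. g j) \<inter> B i) I i = g i"
          using key[OF g] g by (cases "i \<in> I") (auto simp: PiE_def extensional_def)
      qed
    qed
    show "\<forall>S\<in>Pow (\<Union>i\<in>I. B i). (\<Union>j\<in>I. restrict (\<lambda>i. S \<inter> B i) I j) = S" by auto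
    show "(\<lambda>g. \<Union>j\<in>I. g j) ` ?P \<subseteq> Pow (\<Union>i\<in>I. B i)" by (auto simp: PiE_def Pi_def)
    show "(\<lambda>S. restrict (\<lambda>i. S \<inter> B i) I) ` Pow (\<Union>i\<in>I. B i) \<subseteq> ?P" by auto
  qed
  have "(\<Sum>S\<in>Pow (\<Union>i\<in>I. B i). \<Prod>i\<in>I. h i (S \<inter> B i)) = (\<Sum>g\<in>?P. \<Prod>i\<in>I. h i ((\<Union>j\<in>I. g j) \<inter> B i))"
    by (rule sum.reindex_bij_betw[OF bij, symmetric])
  also have "\<dots> = (\<Sum>g\<in>?P. \<Prod>i\<in>I. h i (g i))"
    by (rule sum.cong[OF refl], rule prod.cong[OF refl]) (simp add: key)
  also have "\<dots> = (\<Prod>i\<in>I. \<Sum>A\<in>Pow (B i). h i A)"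
    by (rule prod_sum_PiE[symmetric]) (use finI finB in auto)
  finally show ?thesis .
qed

lemma prod_weights:
  fixes w \<mu> :: "nat \<Rightarrow> nat set \<Rightarrow> real"
  assumes finI: "finite I" and finB: "\<forall>i\<in>I. finite (B i)"
    and disj: "\<forall>i\<in>I. \<forall>j\<in>I. i \<noteq> j \<longrightarrow> B i \<inter> B j = {}"
  shows "(\<Sum>S\<in>Pow (\<Union>i\<in>I. B i). (\<Prod>i\<in>I. w i (S \<inter> B i)) * (\<Prod>i\<in>I. \<mu> i (S \<inter> B i)))
       = (\<Prod>i\<in>I. \<Sum>A\<in>Pow (B i). w i A * \<mu> i A)"
  using sum_pow_prod[OF finI finB disj, of "\<lambda>i A. w i A * \<mu> i A"] by (simp add: prod.distrib)

lemma sum_group_block: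
  fixes \<theta> :: "nat set \<Rightarrow> real"
  assumes "finite V" "B \<subseteq> V"
  shows "(\<Sum>S\<in>Pow V. \<theta> S * g (S \<inter> B)) = (\<Sum>A\<in>Pow B. (\<Sum>S\<in>{S\<in>Pow V. S \<inter> B = A}. \<theta> S) * g A)"
proof -
  have "(\<Sum>S\<in>Pow V. \<theta> S * g (S \<inter> B)) = (\<Sum>A\<in>Pow B. \<Sum>S\<in>{S. S\<in>Pow V \<and> S \<inter> B = A}. \<theta> S * g (S \<inter> B))"
    by (rule sum.group[symmetric]) (use assms in \<open>auto intro: finite_subset\<close>)
  also have "\<dots> = (\<Sum>A\<in>Pow B. (\<Sum>S\<in>{S\<in>Pow V. S \<inter> B = A}. \<theta> S) * g A)"
  proof (rule sum.cong[OF refl])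
    fix A assume "A \<in> Pow B"
    have "(\<Sum>S\<in>{S\<in>Pow V. S \<inter> B = A}. \<theta> S * g (S \<inter> B)) = (\<Sum>S\<in>{S\<in>Pow V. S \<inter> B = A}. \<theta> S * g A)"
      by (rule sum.cong) auto
    also have "\<dots> = (\<Sum>S\<in>{S\<in>Pow V. S \<inter> B = A}. \<theta> S) * g A" by (simp add: sum_distrib_right)
    finally show "(\<Sum>S\<in>{S\<in>Pow V. S \<inter> B = A}. \<theta> S * g (S \<inter> B)) = (\<Sum>S\<in>{S\<in>Pow V. S \<inter> B = A}. \<theta> S) * g A" .
  qed
  finally show ?thesis .
qed

theorem mainTheorem10:
  fixes n m :: nat
    and B :: "nat \<Rightarrow> nat set"
    and fi :: "nat \<Rightarrow> nat set \<Rightarrow> real"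
    and x :: "nat \<Rightarrow> real"
  assumes blocks_cover: "(\<Union>i\<in>{1..m}. B i) = {1..n}"
    and blocks_disj: "\<forall>i\<in>{1..m}. \<forall>j\<in>{1..m}. i \<noteq> j \<longrightarrow> B i \<inter> B j = {}"
    and blocks_size: "\<forall>i\<in>{1..m}. card (B i) \<in> {1, 2, 3}"
    and fi_nonneg: "\<forall>i\<in>{1..m}. nonneg_set_fun (B i) (fi i)"
    and fi_mono: "\<forall>i\<in>{1..m}. monotone_set_fun (B i) (fi i)"
    and fi_submod: "\<forall>i\<in>{1..m}. submodular_set_fun (B i) (fi i)"
    and x_range: "\<forall>i\<in>{1..n}. 0 \<le> x i \<and> x i \<le> 1"
  shows "concave_closure n (\<lambda>S. \<Sum>i=1..m. fi i (S \<inter> B i)) x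
           \<le> 4 / 3 * upper_pi_ext n (\<lambda>S. \<Sum>i=1..m. fi i (S \<inter> B i)) x"
proof -
  define f where "f = (\<lambda>S. \<Sum>i=1..m. fi i (S \<inter> B i))"
  have finI: "finite {1..m}" by simp
  have finB: "\<forall>i\<in>{1..m}. finite (B i)"
  proof
    fix i assume "i \<in> {1..m}"
    hence "card (B i) \<in> {1,2,3}" using blocks_size by blast
    hence "card (B i) \<noteq> 0" by auto
    thus "finite (B i)" by (meson card.infinite)
  qed
  have BV: "\<And>i. i \<in> {1..m} \<Longrightarrow> B i \<subseteq> {1..n}" using blocks_cover by blast
  have finV: "finite {1..n}" by simp
  have "\<forall>i\<in>{1..m}. \<exists>\<mu>. good_block (B i) x (fi i) \<mu>"
  proof
    fix i assume i: "i \<in> {1..m}"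
    show "\<exists>\<mu>. good_block (B i) x (fi i) \<mu>"
      by (rule block_any) (use i blocks_size fi_nonneg fi_mono fi_submod x_range BV[OF i] in auto)
  qed
  then obtain \<mu> where gb: "\<forall>i\<in>{1..m}. good_block (B i) x (fi i) (\<mu> i)" by (metis bchoice)
  have gb1: "\<And>i A. i \<in> {1..m} \<Longrightarrow> A \<in> Pow (B i) \<Longrightarrow> 0 \<le> \<mu> i A"
    using gb unfolding good_block_def by blast
  have gb2: "\<And>i. i \<in> {1..m} \<Longrightarrow> (\<Sum>A\<in>Pow (B i). \<mu> i A) = 1"
    using gb unfolding good_block_def by blast
  have gb3: "\<And>i j. i \<in> {1..m} \<Longrightarrow> j \<in> B i \<Longrightarrow> (\<Sum>A\<in>Pow (B i). (if j\<in>A then 1 else 0) * \<mu> i A) = x j"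
    using gb unfolding good_block_def by blast
  have gb4: "\<And>i j k. i \<in> {1..m} \<Longrightarrow> j \<in> B i \<Longrightarrow> k \<in> B i \<Longrightarrow> j \<noteq> k \<Longrightarrow>
      (\<Sum>A\<in>Pow (B i). (if j\<in>A then 1 else 0) * ((if k\<in>A then 1 else 0) * \<mu> i A)) = x j * x k"
    using gb unfolding good_block_def by blast
  have gb5: "\<And>i \<theta>. i \<in> {1..m} \<Longrightarrow> (\<forall>A\<in>Pow (B i). 0 \<le> \<theta> A) \<Longrightarrow> (\<Sum>A\<in>Pow (B i). \<theta> A) = 1 \<Longrightarrow>
      (\<forall>j\<in>B i. (\<Sum>A\<in>Pow (B i). (if j\<in>A then 1 else 0) * \<theta> A) = x j) \<Longrightarrow>
      (\<Sum>A\<in>Pow (B i). \<theta> A * fi i A) \<le> 4/3 * (\<Sum>A\<in>Pow (B i). \<mu> i A * fi i A)"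
    using gb unfolding good_block_def by blast
  define \<theta>' where "\<theta>' = (\<lambda>S. if S \<subseteq> {1..n} then \<Prod>i\<in>{1..m}. \<mu> i (S \<inter> B i) else 0)"
  have PW: "(\<Sum>S\<in>Pow {1..n}. (\<Prod>i\<in>{1..m}. w i (S \<inter> B i)) * \<theta>' S) = (\<Prod>i\<in>{1..m}. \<Sum>A\<in>Pow (B i). w i A * \<mu> i A)"
    for w :: "nat \<Rightarrow> nat set \<Rightarrow> real"
  proof -
    have "(\<Sum>S\<in>Pow {1..n}. (\<Prod>i\<in>{1..m}. w i (S \<inter> B i)) * \<theta>' S)
        = (\<Sum>S\<in>Pow (\<Union>i\<in>{1..m}. B i). (\<Prod>i\<in>{1..m}. w i (S \<inter> B i)) * (\<Prod>i\<in>{1..m}. \<mu> i (S \<inter> B i)))"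
      unfolding blocks_cover by (rule sum.cong) (auto simp: \<theta>'_def)
    also have "\<dots> = (\<Prod>i\<in>{1..m}. \<Sum>A\<in>Pow (B i). w i A * \<mu> i A)"
      by (rule prod_weights[OF finI finB blocks_disj])
    finally show ?thesis .
  qed
  have obl: "\<exists>i0\<in>{1..m}. j \<in> B i0" if "j \<in> {1..n}" for j using that blocks_cover by blast
  have nn': "\<forall>S. 0 \<le> \<theta>' S"
    unfolding \<theta>'_def by (auto intro!: prod_nonneg gb1)
  have sum1: "(\<Sum>S\<in>Pow {1..n}. \<theta>' S) = 1"
  proof -
    have "(\<Sum>S\<in>Pow {1..n}. \<theta>' S) = (\<Sum>S\<in>Pow {1..n}. (\<Prod>i\<in>{1..m}. (\<lambda>i A. 1::real) i (S \<inter> B i)) * \<theta>' S)"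
      by simp
    also have "\<dots> = (\<Prod>i\<in>{1..m}. \<Sum>A\<in>Pow (B i). 1 * \<mu> i A)" by (rule PW)
    also have "\<dots> = 1" using gb2 by simp
    finally show ?thesis .
  qed
  have marg: "(\<Sum>S\<in>{S\<in>Pow {1..n}. j \<in> S}. \<theta>' S) = x j" if j: "j \<in> {1..n}" for j
  proof -
    obtain i0 where i0: "i0 \<in> {1..m}" "j \<in> B i0" using obl[OF j] by blast
    define w where "w = (\<lambda>i (A::nat set). if i = i0 then (if j \<in> A then 1 else 0) else (1::real))"
    have "(\<Sum>S\<in>{S\<in>Pow {1..n}. j \<in> S}. \<theta>' S) = (\<Sum>S\<in>Pow {1..n}. if j \<in> S then \<theta>' S else 0)"
      by (rule sum.inter_filter) simp
    also have "\<dots> = (\<Sum>S\<in>Pow {1..n}. (if j \<in> S then 1 else 0) * \<theta>' S)"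
      by (rule sum.cong) auto
    also have "\<dots> = (\<Sum>S\<in>Pow {1..n}. (\<Prod>i\<in>{1..m}. w i (S \<inter> B i)) * \<theta>' S)"
      by (rule sum.cong[OF refl]) (use i0 in \<open>simp add: w_def\<close>)
    also have "\<dots> = (\<Prod>i\<in>{1..m}. \<Sum>A\<in>Pow (B i). w i A * \<mu> i A)" by (rule PW)
    also have "\<dots> = (\<Prod>i\<in>{1..m}. if i = i0 then x j else 1)"
      by (rule prod.cong[OF refl]) (use i0 gb2 gb3 in \<open>auto simp: w_def\<close>)
    also have "\<dots> = x j" using i0 by simp
    finally show ?thesis .
  qed
  have pair: "(\<Sum>S\<in>{S\<in>Pow {1..n}. j \<in> S \<and> k \<in> S}. \<theta>' S) = x j * x k"
    if j: "j \<in> {1..n}" and k: "k \<in> {1..n}" and jk: "j < k" for j k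
  proof -
    obtain i0 where i0: "i0 \<in> {1..m}" "j \<in> B i0" using obl[OF j] by blast
    obtain i1 where i1: "i1 \<in> {1..m}" "k \<in> B i1" using obl[OF k] by blast
    define w where "w = (\<lambda>i (A::nat set). (if i = i0 then (if j \<in> A then 1 else 0) else (1::real)) *
                                         (if i = i1 then (if k \<in> A then 1 else 0) else (1::real)))"
    have "(\<Sum>S\<in>{S\<in>Pow {1..n}. j \<in> S \<and> k \<in> S}. \<theta>' S) = (\<Sum>S\<in>Pow {1..n}. if j \<in> S \<and> k \<in> S then \<theta>' S else 0)"
      by (rule sum.inter_filter) simp
    also have "\<dots> = (\<Sum>S\<in>Pow {1..n}. ((if j \<in> S then 1 else 0) * (if k \<in> S then 1 else 0)) * \<theta>' S)"
      by (rule sum.cong) auto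
    also have "\<dots> = (\<Sum>S\<in>Pow {1..n}. (\<Prod>i\<in>{1..m}. w i (S \<inter> B i)) * \<theta>' S)"
      by (rule sum.cong[OF refl]) (use i0 i1 in \<open>simp add: w_def prod.distrib\<close>)
    also have "\<dots> = (\<Prod>i\<in>{1..m}. \<Sum>A\<in>Pow (B i). w i A * \<mu> i A)" by (rule PW)
    also have "\<dots> = (\<Prod>i\<in>{1..m}. (if i = i0 then x j else 1) * (if i = i1 then x k else 1))"
    proof (rule prod.cong[OF refl])
      fix i assume i: "i \<in> {1..m}"
      show "(\<Sum>A\<in>Pow (B i). w i A * \<mu> i A) = (if i = i0 then x j else 1) * (if i = i1 then x k else 1)"
      proof (cases "i = i0"; cases "i = i1")
        assume "i = i0" "i = i1"
        thus ?thesis using gb4[of i j k] i i0 i1 jk by (simp add: w_def mult.assoc)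
      next
        assume "i = i0" "i \<noteq> i1"
        thus ?thesis using gb3[of i j] i i0 by (simp add: w_def)
      next
        assume "i \<noteq> i0" "i = i1"
        thus ?thesis using gb3[of i k] i i1 by (simp add: w_def)
      next
        assume "i \<noteq> i0" "i \<noteq> i1"
        thus ?thesis using gb2[of i] i by (simp add: w_def)
      qed
    qed
    also have "\<dots> = x j * x k" using i0 i1 by (simp add: prod.distrib)
    finally show ?thesis .
  qed
  have valblock: "(\<Sum>S\<in>Pow {1..n}. \<theta>' S * fi i0 (S \<inter> B i0)) = (\<Sum>A\<in>Pow (B i0). \<mu> i0 A * fi i0 A)"
    if i0: "i0 \<in> {1..m}" for i0
  proof -
    define w where "w = (\<lambda>i (A::nat set). if i = i0 then fi i0 A else (1::real))"
    have "(\<Sum>S\<in>Pow {1..n}. \<theta>' S * fi i0 (S \<inter> B i0)) = (\<Sum>S\<in>Pow {1..n}. (\<Prod>i\<in>{1..m}. w i (S \<inter> B i)) * \<theta>' S)"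
      by (rule sum.cong[OF refl]) (use i0 in \<open>simp add: w_def\<close>)
    also have "\<dots> = (\<Prod>i\<in>{1..m}. \<Sum>A\<in>Pow (B i). w i A * \<mu> i A)" by (rule PW)
    also have "\<dots> = (\<Prod>i\<in>{1..m}. if i = i0 then (\<Sum>A\<in>Pow (B i0). \<mu> i0 A * fi i0 A) else 1)"
      by (rule prod.cong[OF refl]) (use i0 gb2 in \<open>auto simp: w_def mult.commute\<close>)
    also have "\<dots> = (\<Sum>A\<in>Pow (B i0). \<mu> i0 A * fi i0 A)" using i0 by simp
    finally show ?thesis .
  qed
  define V' where "V' = (\<Sum>S\<in>Pow {1..n}. \<theta>' S * f S)"
  have V'eq: "V' = (\<Sum>i\<in>{1..m}. \<Sum>A\<in>Pow (B i). \<mu> i A * fi i A)"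
  proof -
    have "V' = (\<Sum>S\<in>Pow {1..n}. \<Sum>i\<in>{1..m}. \<theta>' S * fi i (S \<inter> B i))"
      unfolding V'_def f_def by (simp add: sum_distrib_left)
    also have "\<dots> = (\<Sum>i\<in>{1..m}. \<Sum>S\<in>Pow {1..n}. \<theta>' S * fi i (S \<inter> B i))" by (rule sum.swap)
    also have "\<dots> = (\<Sum>i\<in>{1..m}. \<Sum>A\<in>Pow (B i). \<mu> i A * fi i A)"
      by (rule sum.cong[OF refl]) (rule valblock)
    finally show ?thesis .
  qed
  have dist': "is_distribution n \<theta>'"
    unfolding is_distribution_def using nn' sum1 by (auto simp: \<theta>'_def)
  have marg': "marginals_ok n x \<theta>'" unfolding marginals_ok_def using marg by blast
  have pair': "pairwise_ok n x \<theta>'" unfolding pairwise_ok_def using pair by blast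
  have bound: "(\<Sum>S\<in>Pow {1..n}. \<theta> S * f S) \<le> 4/3 * V'"
    if d: "is_distribution n \<theta>" and mg: "marginals_ok n x \<theta>" for \<theta>
  proof -
    define \<theta>B where "\<theta>B = (\<lambda>i A. \<Sum>S\<in>{S\<in>Pow {1..n}. S \<inter> B i = A}. \<theta> S)"
    have th0: "\<forall>S. 0 \<le> \<theta> S" and thsum: "(\<Sum>S\<in>Pow {1..n}. \<theta> S) = 1" using d unfolding is_distribution_def by auto
    have grp: "(\<Sum>S\<in>Pow {1..n}. \<theta> S * g (S \<inter> B i)) = (\<Sum>A\<in>Pow (B i). \<theta>B i A * g A)"
      if i: "i \<in> {1..m}" for i and g :: "nat set \<Rightarrow> real"
      unfolding \<theta>B_def by (rule sum_group_block[OF finV BV[OF i]])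
    have blk: "(\<Sum>A\<in>Pow (B i). \<theta>B i A * fi i A) \<le> 4/3 * (\<Sum>A\<in>Pow (B i). \<mu> i A * fi i A)"
      if i: "i \<in> {1..m}" for i
    proof (rule gb5[OF i])
      show "\<forall>A\<in>Pow (B i). 0 \<le> \<theta>B i A" unfolding \<theta>B_def using th0 by (auto intro: sum_nonneg)
      have "(\<Sum>A\<in>Pow (B i). \<theta>B i A) = (\<Sum>A\<in>Pow (B i). \<theta>B i A * (\<lambda>_. 1) A)" by simp
      also have "\<dots> = (\<Sum>S\<in>Pow {1..n}. \<theta> S * (\<lambda>_. 1) (S \<inter> B i))" by (rule grp[OF i, symmetric])
      also have "\<dots> = 1" using thsum by simp
      finally show "(\<Sum>A\<in>Pow (B i). \<theta>B i A) = 1" .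
      show "\<forall>j\<in>B i. (\<Sum>A\<in>Pow (B i). (if j\<in>A then 1 else 0) * \<theta>B i A) = x j"
      proof
        fix j assume j: "j \<in> B i"
        have jV: "j \<in> {1..n}" using j BV[OF i] by blast
        have "(\<Sum>A\<in>Pow (B i). (if j\<in>A then 1 else 0) * \<theta>B i A) = (\<Sum>A\<in>Pow (B i). \<theta>B i A * (\<lambda>A. if j\<in>A then 1 else 0) A)"
          by (simp add: mult.commute)
        also have "\<dots> = (\<Sum>S\<in>Pow {1..n}. \<theta> S * (\<lambda>A. if j\<in>A then 1 else 0) (S \<inter> B i))" by (rule grp[OF i, symmetric])
        also have "\<dots> = (\<Sum>S\<in>Pow {1..n}. if j \<in> S then \<theta> S else 0)"
          by (rule sum.cong) (use j in auto)
        also have "\<dots> = (\<Sum>S\<in>{S\<in>Pow {1..n}. j \<in> S}. \<theta> S)"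
          by (rule sum.inter_filter[symmetric]) simp
        also have "\<dots> = x j" using mg jV unfolding marginals_ok_def by blast
        finally show "(\<Sum>A\<in>Pow (B i). (if j\<in>A then 1 else 0) * \<theta>B i A) = x j" .
      qed
    qed
    have "(\<Sum>S\<in>Pow {1..n}. \<theta> S * f S) = (\<Sum>i\<in>{1..m}. \<Sum>S\<in>Pow {1..n}. \<theta> S * fi i (S \<inter> B i))"
      unfolding f_def by (simp add: sum_distrib_left) (rule sum.swap)
    also have "\<dots> = (\<Sum>i\<in>{1..m}. \<Sum>A\<in>Pow (B i). \<theta>B i A * fi i A)"
      by (rule sum.cong[OF refl]) (rule grp)
    also have "\<dots> \<le> (\<Sum>i\<in>{1..m}. 4/3 * (\<Sum>A\<in>Pow (B i). \<mu> i A * fi i A))"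
      by (rule sum_mono) (rule blk)
    also have "\<dots> = 4/3 * V'" unfolding V'eq by (simp add: sum_distrib_left)
    finally show ?thesis .
  qed
  let ?C = "{(\<Sum>S\<in>Pow {1..n}. \<theta> S * f S) | \<theta>. is_distribution n \<theta> \<and> marginals_ok n x \<theta>}"
  let ?P = "{(\<Sum>S\<in>Pow {1..n}. \<theta> S * f S) | \<theta>. is_distribution n \<theta> \<and> marginals_ok n x \<theta> \<and> pairwise_ok n x \<theta>}"
  have inC: "V' \<in> ?C" unfolding V'_def using dist' marg' by blast
  have inP: "V' \<in> ?P" unfolding V'_def using dist' marg' pair' by blast
  have bddP: "bdd_above ?P"
  proof (rule bdd_aboveI[where M = "\<Sum>S\<in>Pow {1..n}. \<bar>f S\<bar>"])
    fix v assume "v \<in> ?P"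
    then obtain \<theta> where v: "v = (\<Sum>S\<in>Pow {1..n}. \<theta> S * f S)" and d: "is_distribution n \<theta>" by blast
    have th0: "\<forall>S. 0 \<le> \<theta> S" and thsum: "(\<Sum>S\<in>Pow {1..n}. \<theta> S) = 1" using d unfolding is_distribution_def by auto
    have "\<theta> S * f S \<le> \<bar>f S\<bar>" if S: "S \<in> Pow {1..n}" for S
    proof -
      have "\<theta> S \<le> (\<Sum>S\<in>Pow {1..n}. \<theta> S)" by (rule member_le_sum) (use S th0 in auto)
      hence t1: "\<theta> S \<le> 1" using thsum by simp
      have "\<theta> S * f S \<le> \<theta> S * \<bar>f S\<bar>" using th0 by (simp add: mult_left_mono)
      also have "\<dots> \<le> 1 * \<bar>f S\<bar>" using t1 by (intro mult_right_mono) auto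
      finally show ?thesis by simp
    qed
    then show "v \<le> (\<Sum>S\<in>Pow {1..n}. \<bar>f S\<bar>)" unfolding v by (rule sum_mono)
  qed
  have "concave_closure n f x = Sup ?C" unfolding concave_closure_def by simp
  also have "\<dots> \<le> 4/3 * V'"
  proof (rule cSup_least)
    show "?C \<noteq> {}" using inC by blast
    fix v assume "v \<in> ?C"
    then obtain \<theta> where "v = (\<Sum>S\<in>Pow {1..n}. \<theta> S * f S)" "is_distribution n \<theta>" "marginals_ok n x \<theta>" by blast
    then show "v \<le> 4/3 * V'" using bound by simp
  qed
  also have "\<dots> \<le> 4/3 * Sup ?P" using cSup_upper[OF inP bddP] by simp
  also have "\<dots> = 4/3 * upper_pi_ext n f x" unfolding upper_pi_ext_def by simp
  finally show ?thesis unfolding f_def .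
qed

end
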